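(* A Borel measurable function $f:\mathbb{R}^n\to\mathbb{R}$ is level convex if and only if for every $d\ge1$, every open set $\Omega\subseteq\mathbb{R}^d$, every Borel probability measure $\mu$ on $\mathbb{R}^d$ supported on $\Omega$ and every $\varphi\in L^1_\mu(\Omega;\mathbb{R}^n)$, $$f\Big(\int_\Omega\varphi\,d\mu\Big)\le\mu\text{-}\operatorname*{ess\,sup}_{x\in\Omega}f(\varphi(x)).$$ In particular, if $f$ is level convex and $\Omega$ has finite positive Lebesgue measure, then $f\big(\frac{1}{|\Omega|}\int_\Omega\varphi\,dx\big)\le\operatorname{ess\,sup}_{x\in\Omega}f(\varphi(x))$ for every $\varphi\in L^1(\Omega;\mathbb{R}^n)$.
   Context: Level convex: $f(\lambda\xi+(1-\lambda)\eta)\le\max\{f(\xi),f(\eta)\}$ for all $\xi,\eta\in\mathbb{R}^n$ and $\lambda\in(0,1)$. $\mu\text{-}\operatorname{ess\,sup}$ denotes the essential supremum with respect to $\mu$. *)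

theory Defs
  imports "HOL-Probability.Probability"
begin

definition level_convex :: "('a::real_vector \<Rightarrow> real) \<Rightarrow> bool" where
  "level_convex f \<longleftrightarrow>
     (\<forall>\<xi> \<eta>. \<forall>t::real. 0 < t \<and> t < 1 \<longrightarrow>
        f (t *\<^sub>R \<xi> + (1 - t) *\<^sub>R \<eta>) \<le> max (f \<xi>) (f \<eta>))"

text \<open>Explicit model of R^d (d varies inside the statement): functions on the index set
  {..<d} (extensional, i.e. undefined outside), with the product topology of the
  Euclidean line, the Borel product measure, and Lebesgue measure = its completion.\<close>
definition Rd_top :: "nat \<Rightarrow> (nat \<Rightarrow> real) topology" where
  "Rd_top d = product_topology (\<lambda>_. euclideanreal) {..<d}"

definition Rd_borel :: "nat \<Rightarrow> (nat \<Rightarrow> real) measure" where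
  "Rd_borel d = (\<Pi>\<^sub>M i\<in>{..<d}. lborel)"

definition Rd_lebesgue :: "nat \<Rightarrow> (nat \<Rightarrow> real) measure" where
  "Rd_lebesgue d = completion (Rd_borel d)"

end

theory Submission imports Defs begin

lemma bary_aux:
  fixes \<phi> :: "'b \<Rightarrow> 'a::euclidean_space"
  assumes M: "prob_space M" and int: "integrable M \<phi>"
  shows "\<forall>C. convex C \<longrightarrow> aff_dim C < int n \<longrightarrow> (AE x in M. \<phi> x \<in> C) \<longrightarrow> integral\<^sup>L M \<phi> \<in> C"
proof (induction n)
  case 0
  show ?case
  proof (intro allI impI)
    fix C :: "'a set"
    assume "aff_dim C < int 0" and ae: "AE x in M. \<phi> x \<in> C"
    then have "C = {}" using aff_dim_negative_iff by simp
    with ae have "AE x in M. False" by simp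
    with prob_space.AE_False[OF M] show "integral\<^sup>L M \<phi> \<in> C" by simp
  qed
next
  case (Suc n)
  show ?case
  proof (intro allI impI)
    fix C :: "'a set"
    assume cC: "convex C" and dC: "aff_dim C < int (Suc n)" and ae: "AE x in M. \<phi> x \<in> C"
    define m where "m = integral\<^sup>L M \<phi>"
    have Cne: "C \<noteq> {}"
    proof
      assume "C = {}"
      with ae have "AE x in M. False" by simp
      with prob_space.AE_False[OF M] show False by simp
    qed
    show "integral\<^sup>L M \<phi> \<in> C"
    proof (cases "m \<in> rel_interior C")
      case True
      then show ?thesis using rel_interior_subset m_def by blast
    next
      case False
      have rne: "rel_interior C \<noteq> {}" using Cne cC rel_interior_eq_empty by blast
      obtain a b where aff: "m + a \<in> affine hull (insert m (rel_interior C))"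
        and a0: "a \<noteq> 0" and amb: "a \<bullet> m \<le> b" and ageb: "\<And>u. u \<in> rel_interior C \<Longrightarrow> a \<bullet> u \<ge> b"
        using separating_hyperplane_set_point_inaff[of "rel_interior C" m] False rne
          convex_rel_interior[OF cC] by blast
      have closC: "\<And>y. y \<in> closure (rel_interior C) \<Longrightarrow> a \<bullet> y \<ge> b"
      proof -
        fix y assume "y \<in> closure (rel_interior C)"
        moreover have "closed {y. a \<bullet> y \<ge> b}" by (rule closed_halfspace_ge)
        moreover have "rel_interior C \<subseteq> {y. a \<bullet> y \<ge> b}" using ageb by blast
        ultimately show "a \<bullet> y \<ge> b" using closure_minimal by blast
      qed
      have ge: "\<And>y. y \<in> C \<Longrightarrow> a \<bullet> y \<ge> a \<bullet> m"
        using closC closure_subset convex_closure_rel_interior[OF cC] amb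
        by (metis order_trans subsetD)
      have ex: "\<exists>y\<in>C. a \<bullet> y > a \<bullet> m"
      proof (rule ccontr)
        assume "\<not> ?thesis"
        then have eq: "\<And>y. y \<in> C \<Longrightarrow> a \<bullet> y = a \<bullet> m" using ge by force
        let ?H = "{y. a \<bullet> y = a \<bullet> m}"
        have "insert m (rel_interior C) \<subseteq> ?H" using eq rel_interior_subset by auto
        then have "affine hull (insert m (rel_interior C)) \<subseteq> ?H"
          by (simp add: affine_hyperplane hull_minimal)
        with aff have "a \<bullet> (m + a) = a \<bullet> m" by auto
        then have "a \<bullet> a = 0" by (simp add: inner_add_right)
        with a0 show False by simp
      qed
      then obtain y where yC: "y \<in> C" and ym: "a \<bullet> y > a \<bullet> m" by blast
      let ?H = "{y. a \<bullet> y = a \<bullet> m}"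
      define C' where "C' = C \<inter> ?H"
      have cC': "convex C'" unfolding C'_def by (intro convex_Int cC convex_hyperplane)
      have "affine hull C' \<subseteq> ?H"
        unfolding C'_def by (intro hull_minimal) (auto simp: affine_hyperplane)
      moreover have "affine hull C' \<subseteq> affine hull C" unfolding C'_def by (intro hull_mono) blast
      moreover have "y \<in> affine hull C" using yC by (rule hull_inc)
      moreover have "y \<notin> ?H" using ym by simp
      ultimately have "affine hull C' \<subset> affine hull C" by (metis psubsetI subsetD)
      then have "aff_dim C' < aff_dim C" by (rule aff_dim_psubset)
      with dC have dC': "aff_dim C' < int n" by simp
      have i1: "integrable M (\<lambda>x. a \<bullet> \<phi> x)" using int by (rule integrable_inner_right)
      have i2: "integrable M (\<lambda>x. a \<bullet> m)" using M by (simp add: prob_space_def finite_measure.integrable_const)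
      have intg: "integrable M (\<lambda>x. a \<bullet> \<phi> x - a \<bullet> m)"
        using i1 i2 by (rule Bochner_Integration.integrable_diff)
      have "integral\<^sup>L M (\<lambda>x. a \<bullet> \<phi> x - a \<bullet> m) = integral\<^sup>L M (\<lambda>x. a \<bullet> \<phi> x) - integral\<^sup>L M (\<lambda>x. a \<bullet> m)"
        using i1 i2 by (rule Bochner_Integration.integral_diff)
      also have "integral\<^sup>L M (\<lambda>x. a \<bullet> \<phi> x) = a \<bullet> m"
        unfolding m_def by (rule integral_inner_right) (use int in simp)
      also have "integral\<^sup>L M (\<lambda>x. a \<bullet> m) = a \<bullet> m"
        using prob_space.prob_space[OF M] by simp
      finally have i0: "integral\<^sup>L M (\<lambda>x. a \<bullet> \<phi> x - a \<bullet> m) = 0" by simp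
      have nn: "AE x in M. 0 \<le> a \<bullet> \<phi> x - a \<bullet> m" using ae ge by (auto elim: AE_mp)
      have "AE x in M. a \<bullet> \<phi> x - a \<bullet> m = 0"
        using integral_nonneg_eq_0_iff_AE[OF intg nn] i0 by simp
      with ae have "AE x in M. \<phi> x \<in> C'" unfolding C'_def by (auto elim: AE_mp)
      with Suc.IH cC' dC' have "m \<in> C'" unfolding m_def by blast
      then show ?thesis unfolding C'_def m_def by blast
    qed
  qed
qed

lemma barycenter_in_convex:
  fixes \<phi> :: "'b \<Rightarrow> 'a::euclidean_space"
  assumes "prob_space M" "integrable M \<phi>" "convex C" "AE x in M. \<phi> x \<in> C"
  shows "integral\<^sup>L M \<phi> \<in> C"
proof -
  have g: "aff_dim C \<ge> -1" by (rule aff_dim_geq)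
  have "aff_dim C < int (nat (aff_dim C + 1))" using g by linarith
  then show ?thesis using bary_aux[OF assms(1,2)] assms(3,4) by blast
qed

lemma lc_convex_sublevel:
  assumes "level_convex f"
  shows "convex {y. f y \<le> (c::real)}"
  unfolding convex_def
proof (intro ballI allI impI)
  fix x y and u v :: real
  assume x: "x \<in> {y. f y \<le> c}" and y: "y \<in> {y. f y \<le> c}" and uv: "0 \<le> u" "0 \<le> v" "u + v = 1"
  show "u *\<^sub>R x + v *\<^sub>R y \<in> {y. f y \<le> c}"
  proof (cases "u = 0 \<or> v = 0")
    case True
    then show ?thesis using x y uv by auto
  next
    case False
    then have "0 < u" "u < 1" "v = 1 - u" using uv by auto
    then have "f (u *\<^sub>R x + v *\<^sub>R y) \<le> max (f x) (f y)"
      using assms unfolding level_convex_def by blast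
    then show ?thesis using x y by simp
  qed
qed

lemma lc_core:
  fixes \<phi> :: "'b \<Rightarrow> 'a::euclidean_space"
  assumes "level_convex f" "prob_space N" "integrable N \<phi>" "AE x in N. f (\<phi> x) \<le> c"
  shows "f (integral\<^sup>L N \<phi>) \<le> c"
proof -
  have "integral\<^sup>L N \<phi> \<in> {y. f y \<le> c}"
    using assms by (intro barycenter_in_convex lc_convex_sublevel) auto
  then show ?thesis by simp
qed

lemma lc_jensen:
  fixes \<phi> :: "'b \<Rightarrow> 'a::euclidean_space"
  assumes lc: "level_convex f" and N: "prob_space N" and int: "integrable N \<phi>"
  shows "ereal (f (integral\<^sup>L N \<phi>)) \<le> esssup N (\<lambda>x. ereal (f (\<phi> x)))"
proof -
  have ae: "AE x in N. ereal (f (\<phi> x)) \<le> esssup N (\<lambda>x. ereal (f (\<phi> x)))" by (rule esssup_AE)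
  show ?thesis
  proof (cases "esssup N (\<lambda>x. ereal (f (\<phi> x)))" rule: ereal_cases)
    case (real c)
    with ae have "AE x in N. f (\<phi> x) \<le> c" by simp
    with lc_core[OF lc N int] real show ?thesis by simp
  next
    case PInf
    then show ?thesis by simp
  next
    case MInf
    with ae have "AE x in N. False" by simp
    with prob_space.AE_False[OF N] show ?thesis by simp
  qed
qed


lemma lc_lebesgue:
  fixes \<phi> :: "(nat \<Rightarrow> real) \<Rightarrow> 'a::euclidean_space"
  assumes lc: "level_convex f"
    and pos: "0 < emeasure L \<Omega>" and fin: "emeasure L \<Omega> < \<infinity>"
    and si: "set_integrable L \<Omega> \<phi>"
  shows "ereal (f ((1 / measure L \<Omega>) *\<^sub>R (LINT x:\<Omega>|L. \<phi> x)))
                \<le> esssup (restrict_space L \<Omega>) (\<lambda>x. ereal (f (\<phi> x)))"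
proof -
  have \<Omega>: "\<Omega> \<in> sets L" using pos emeasure_notin_sets by force
  have \<Omega>sp: "\<Omega> \<inter> space L \<in> sets L" using \<Omega> by simp
  define m where "m = measure L \<Omega>"
  have em: "emeasure L \<Omega> = ennreal m" using fin unfolding m_def by (simp add: emeasure_eq_ennreal_measure)
  have mpos: "m > 0" using pos em by (metis ennreal_less_zero_iff)
  define \<psi> where "\<psi> x = indicator \<Omega> x *\<^sub>R \<phi> x" for x
  have ipsi: "integrable L \<psi>" using si unfolding set_integrable_def \<psi>_def .
  define U where "U = uniform_measure L \<Omega>"
  have U: "prob_space U" unfolding U_def using pos fin by (intro prob_space_uniform_measure) auto
  have Ud: "U = density L (\<lambda>x. ennreal (indicator \<Omega> x / m))"
    unfolding U_def uniform_measure_def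
  proof (rule density_cong)
    show "(\<lambda>x. indicator \<Omega> x / emeasure L \<Omega>) \<in> borel_measurable L" using \<Omega> by measurable
    show "AE x in L. indicator \<Omega> x / emeasure L \<Omega> = ennreal (indicator \<Omega> x / m)"
      using mpos by (intro AE_I2) (auto simp: em indicator_def divide_ennreal ennreal_1[symmetric] simp del: ennreal_1)
    show "(\<lambda>x. ennreal (indicator \<Omega> x / m)) \<in> borel_measurable L" using \<Omega> by measurable
  qed
  have gm: "(\<lambda>x. indicator \<Omega> x / m) \<in> borel_measurable L" using \<Omega> by measurable
  have gnn: "AE x in L. 0 \<le> indicator \<Omega> x / m" using mpos by (intro AE_I2) auto
  have psim: "\<psi> \<in> borel_measurable L" using ipsi by (rule borel_measurable_integrable)
  have eqf: "(\<lambda>x. (indicator \<Omega> x / m) *\<^sub>R \<psi> x) = (\<lambda>x. (1/m) *\<^sub>R \<psi> x)"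
    unfolding \<psi>_def by (auto simp: indicator_def fun_eq_iff)
  have iU: "integrable U \<psi>"
    unfolding Ud by (subst integrable_density[OF psim gm gnn]) (use ipsi in \<open>simp add: eqf\<close>)
  have intU: "integral\<^sup>L U \<psi> = (1 / m) *\<^sub>R (LINT x:\<Omega>|L. \<phi> x)"
    unfolding Ud by (subst integral_density[OF psim gm gnn]) (unfold eqf, simp only: integral_scaleR_right set_lebesgue_integral_def \<psi>_def)
  let ?E = "esssup (restrict_space L \<Omega>) (\<lambda>x. ereal (f (\<phi> x)))"
  have ae: "AE x in restrict_space L \<Omega>. ereal (f (\<phi> x)) \<le> ?E" by (rule esssup_AE)
  then have aeL: "AE x in L. x \<in> \<Omega> \<longrightarrow> ereal (f (\<phi> x)) \<le> ?E"
    using AE_restrict_space_iff[OF \<Omega>sp] by simp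
  show ?thesis
  proof (cases ?E rule: ereal_cases)
    case (real c)
    have "AE x in U. f (\<psi> x) \<le> c"
      unfolding U_def using pos fin aeL real
      by (subst AE_uniform_measure) (auto simp: \<psi>_def elim!: AE_mp)
    from lc_core[OF lc U iU this] real show ?thesis by (simp add: intU m_def)
  next
    case PInf
    then show ?thesis by simp
  next
    case MInf
    with aeL have "AE x in L. x \<notin> \<Omega>" by simp
    then have "emeasure L \<Omega> = 0"
      using AE_iff_measurable[OF \<Omega>, of "\<lambda>x. x \<notin> \<Omega>"] sets.sets_into_space[OF \<Omega>] by auto
    with pos show ?thesis by simp
  qed
qed


lemma lc_converse:
  fixes f :: "'a::euclidean_space \<Rightarrow> real"
  assumes fm: "f \<in> borel_measurable borel"
    and H: "\<And>\<Omega> (\<mu>::(nat \<Rightarrow> real) measure) (\<phi>::(nat \<Rightarrow> real) \<Rightarrow> 'a).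
                openin (Rd_top 1) \<Omega> \<Longrightarrow>
                prob_space \<mu> \<Longrightarrow>
                sets \<mu> = sets (Rd_borel 1) \<Longrightarrow>
                emeasure \<mu> \<Omega> = 1 \<Longrightarrow>
                integrable (completion \<mu>) \<phi> \<Longrightarrow>
                ereal (f (integral\<^sup>L (completion \<mu>) \<phi>))
                  \<le> esssup (completion \<mu>) (\<lambda>x. ereal (f (\<phi> x)))"
  shows "level_convex f"
  unfolding level_convex_def
proof (intro allI impI)
  fix \<xi> \<eta> :: 'a and t :: real
  assume t: "0 < t \<and> t < 1"
  define B where "B = Rd_borel 1"
  define p where "p = bernoulli_pmf t"
  define g :: "bool \<Rightarrow> nat \<Rightarrow> real" where "g b = (\<lambda>i\<in>{..<1}. if b then 0 else 1)" for b
  define \<phi> :: "(nat \<Rightarrow> real) \<Rightarrow> 'a" where "\<phi> x = \<xi> + (x 0) *\<^sub>R (\<eta> - \<xi>)" for x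
  define \<mu> where "\<mu> = distr (measure_pmf p) B g"
  have spB: "space B = (\<Pi>\<^sub>E i\<in>{..<1}. UNIV)" unfolding B_def Rd_borel_def by (simp add: space_PiM)
  have gm: "g \<in> measure_pmf p \<rightarrow>\<^sub>M B" unfolding measurable_pmf_measure1 spB g_def by auto
  have \<phi>m: "\<phi> \<in> borel_measurable B" unfolding \<phi>_def B_def Rd_borel_def by measurable
  have f\<phi>m: "(\<lambda>x. ereal (f (\<phi> x))) \<in> borel_measurable B" using \<phi>m fm by measurable
  have sets\<mu>: "sets \<mu> = sets B" unfolding \<mu>_def by simp
  have \<mu>: "prob_space \<mu>" unfolding \<mu>_def by (rule prob_space.prob_space_distr[OF prob_space_measure_pmf gm])
  have \<phi>m\<mu>: "\<phi> \<in> borel_measurable \<mu>" using \<phi>m measurable_cong_sets[OF sets\<mu> refl] by blast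
  have f\<phi>m\<mu>: "(\<lambda>x. ereal (f (\<phi> x))) \<in> borel_measurable \<mu>" using f\<phi>m measurable_cong_sets[OF sets\<mu> refl] by blast
  define \<Omega> where "\<Omega> = topspace (Rd_top 1)"
  have op: "openin (Rd_top 1) \<Omega>" unfolding \<Omega>_def by (rule openin_topspace)
  have \<Omega>sp: "\<Omega> = space \<mu>" unfolding \<Omega>_def \<mu>_def Rd_top_def by (simp add: spB topspace_product_topology)
  have em: "emeasure \<mu> \<Omega> = 1" unfolding \<Omega>sp by (rule prob_space.emeasure_space_1[OF \<mu>])
  have fin: "finite (set_pmf p)" by simp
  have int\<mu>: "integrable \<mu> \<phi>"
    unfolding \<mu>_def by (subst integrable_distr_eq[OF gm \<phi>m]) (rule integrable_measure_pmf_finite[OF fin])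
  have intc: "integrable (completion \<mu>) \<phi>" using int\<mu> integrable_completion[OF \<phi>m\<mu>] by simp
  have g1: "\<phi> (g True) = \<xi>" unfolding \<phi>_def g_def by simp
  have g2: "\<phi> (g False) = \<eta>" unfolding \<phi>_def g_def by simp
  have "integral\<^sup>L (completion \<mu>) \<phi> = integral\<^sup>L \<mu> \<phi>" by (rule integral_completion[OF \<phi>m\<mu>])
  also have "\<dots> = integral\<^sup>L (measure_pmf p) (\<lambda>b. \<phi> (g b))" unfolding \<mu>_def by (rule integral_distr[OF gm \<phi>m])
  also have "\<dots> = (\<Sum>b\<in>UNIV. pmf p b *\<^sub>R \<phi> (g b))" by (rule integral_measure_pmf) auto
  also have "\<dots> = t *\<^sub>R \<xi> + (1 - t) *\<^sub>R \<eta>"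
    using t by (simp add: UNIV_bool p_def g1 g2 pmf_bernoulli_True pmf_bernoulli_False)
  finally have ieq: "integral\<^sup>L (completion \<mu>) \<phi> = t *\<^sub>R \<xi> + (1 - t) *\<^sub>R \<eta>" .
  have "esssup (completion \<mu>) (\<lambda>x. ereal (f (\<phi> x))) \<le> ereal (max (f \<xi>) (f \<eta>))"
  proof (rule esssup_I)
    show "(\<lambda>x. ereal (f (\<phi> x))) \<in> borel_measurable (completion \<mu>)"
      using f\<phi>m\<mu> by (rule measurable_completion)
    have "{x \<in> space B. ereal (f (\<phi> x)) \<le> ereal (max (f \<xi>) (f \<eta>))} \<in> sets B"
      using f\<phi>m by measurable
    then have "AE x in \<mu>. ereal (f (\<phi> x)) \<le> ereal (max (f \<xi>) (f \<eta>))"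
      unfolding \<mu>_def
    proof (subst AE_distr_iff[OF gm])
      show "AE x in measure_pmf p. ereal (f (\<phi> (g x))) \<le> ereal (max (f \<xi>) (f \<eta>))"
      proof (rule AE_I2)
        fix b :: bool show "ereal (f (\<phi> (g b))) \<le> ereal (max (f \<xi>) (f \<eta>))"
          by (cases b) (auto simp: g1 g2)
      qed
    qed auto
    then show "AE x in completion \<mu>. ereal (f (\<phi> x)) \<le> ereal (max (f \<xi>) (f \<eta>))"
      by (rule AE_completion)
  qed
  moreover have "ereal (f (integral\<^sup>L (completion \<mu>) \<phi>)) \<le> esssup (completion \<mu>) (\<lambda>x. ereal (f (\<phi> x)))"
    using H[OF op \<mu> _ em intc] sets\<mu> B_def by simp
  ultimately show "f (t *\<^sub>R \<xi> + (1 - t) *\<^sub>R \<eta>) \<le> max (f \<xi>) (f \<eta>)"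
    using ieq by (metis ereal_less_eq(3) order_trans)
qed

theorem mainTheorem20:
  fixes f :: "'a::euclidean_space \<Rightarrow> real"
  assumes "f \<in> borel_measurable borel"
  shows "(level_convex f \<longleftrightarrow>
           (\<forall>d::nat. d \<ge> 1 \<longrightarrow>
             (\<forall>(\<Omega>::(nat \<Rightarrow> real) set) (\<mu>::(nat \<Rightarrow> real) measure) (\<phi>::(nat \<Rightarrow> real) \<Rightarrow> 'a).
                openin (Rd_top d) \<Omega> \<longrightarrow>
                prob_space \<mu> \<longrightarrow>
                sets \<mu> = sets (Rd_borel d) \<longrightarrow>
                emeasure \<mu> \<Omega> = 1 \<longrightarrow>
                integrable (completion \<mu>) \<phi> \<longrightarrow>
                ereal (f (integral\<^sup>L (completion \<mu>) \<phi>))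
                  \<le> esssup (completion \<mu>) (\<lambda>x. ereal (f (\<phi> x))))))
         \<and>
         (level_convex f \<longrightarrow>
           (\<forall>(d::nat) (\<Omega>::(nat \<Rightarrow> real) set) (\<phi>::(nat \<Rightarrow> real) \<Rightarrow> 'a).
              d \<ge> 1 \<longrightarrow>
              openin (Rd_top d) \<Omega> \<longrightarrow>
              0 < emeasure (Rd_lebesgue d) \<Omega> \<longrightarrow>
              emeasure (Rd_lebesgue d) \<Omega> < \<infinity> \<longrightarrow>
              set_integrable (Rd_lebesgue d) \<Omega> \<phi> \<longrightarrow>
              ereal (f ((1 / measure (Rd_lebesgue d) \<Omega>) *\<^sub>R (LINT x:\<Omega>|Rd_lebesgue d. \<phi> x)))
                \<le> esssup (restrict_space (Rd_lebesgue d) \<Omega>) (\<lambda>x. ereal (f (\<phi> x)))))"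
proof (intro conjI iffI allI impI)
  fix d :: nat and \<Omega> :: "(nat \<Rightarrow> real) set" and \<mu> :: "(nat \<Rightarrow> real) measure" and \<phi> :: "(nat \<Rightarrow> real) \<Rightarrow> 'a"
  assume "level_convex f" "prob_space \<mu>" "integrable (completion \<mu>) \<phi>"
  then show "ereal (f (integral\<^sup>L (completion \<mu>) \<phi>)) \<le> esssup (completion \<mu>) (\<lambda>x. ereal (f (\<phi> x)))"
    by (intro lc_jensen prob_space.prob_space_completion)
next
  assume H: "\<forall>d::nat. d \<ge> 1 \<longrightarrow>
             (\<forall>(\<Omega>::(nat \<Rightarrow> real) set) (\<mu>::(nat \<Rightarrow> real) measure) (\<phi>::(nat \<Rightarrow> real) \<Rightarrow> 'a).
                openin (Rd_top d) \<Omega> \<longrightarrow>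
                prob_space \<mu> \<longrightarrow>
                sets \<mu> = sets (Rd_borel d) \<longrightarrow>
                emeasure \<mu> \<Omega> = 1 \<longrightarrow>
                integrable (completion \<mu>) \<phi> \<longrightarrow>
                ereal (f (integral\<^sup>L (completion \<mu>) \<phi>))
                  \<le> esssup (completion \<mu>) (\<lambda>x. ereal (f (\<phi> x))))"
  show "level_convex f"
    by (rule lc_converse[OF assms]) (use H in auto)
next
  fix d :: nat and \<Omega> :: "(nat \<Rightarrow> real) set" and \<phi> :: "(nat \<Rightarrow> real) \<Rightarrow> 'a"
  assume "level_convex f" "0 < emeasure (Rd_lebesgue d) \<Omega>" "emeasure (Rd_lebesgue d) \<Omega> < \<infinity>"
    "set_integrable (Rd_lebesgue d) \<Omega> \<phi>"
  then show "ereal (f ((1 / measure (Rd_lebesgue d) \<Omega>) *\<^sub>R (LINT x:\<Omega>|Rd_lebesgue d. \<phi> x)))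
                \<le> esssup (restrict_space (Rd_lebesgue d) \<Omega>) (\<lambda>x. ereal (f (\<phi> x)))"
    by (rule lc_lebesgue)
qed

end
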